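(* Let $\mathcal H=(V,E)$ be a hypergraph with splitting functions, let $R\subseteq V$, $\varepsilon>0$ and $\alpha>0$. Then the set $S_L$ returned by Algorithm 2 satisfies $$S_L\in\arg\min_{S\subseteq V}\mathrm{Hstcut}_\alpha(S).$$
   Context: A hypergraph $\mathcal H=(V,E)$ has a finite node set $V$, and each hyperedge $e\in E$ is a subset of $V$. Each hyperedge $e$ carries a splitting function $w_e:2^e\to\mathbb R_{\ge0}$ satisfying $w_e(A)=w_e(e\setminus A)$ for all $A\subseteq e$ and $w_e(\emptyset)=w_e(e)=0$. For $S\subseteq V$, $\mathrm{cut}_{\mathcal H}(S)=\sum_{e\in E}w_e(e\cap S)$. The degree of $v$ is $d_v=\sum_{e\ni v}w_e(\{v\})$, and $\mathrm{vol}(S)=\sum_{v\in S}d_v$. Write $\bar S=V\setminus S$. For $\alpha>0$, $\mathrm{Hstcut}_\alpha(S)=\mathrm{cut}_{\mathcal H}(S)+\alpha\,\mathrm{vol}(\bar S\cap R)+\alpha\varepsilon\,\mathrm{vol}(S\cap\bar R)$. This is the $s$-$t$ cut value of $S\cup\{s\}$ in the hypergraph $\mathcal H_\alpha$ obtained from $\mathcal H$ by adding terminal edges $(s,r)$ of weight $\alpha d_r$ for $r\in R$ and $(j,t)$ of weight $\alpha\varepsilon d_j$ for $j\in\bar R$. Neighborhood notation: $E(v)=\{e\in E: v\in e\}$ and $E(S)=\bigcup_{v\in S}E(v)$. Also $\mathcal N(v)=\{u: \exists e\in E,\ u,v\in e\}$ and $\mathcal N(S)=\bigcup_{v\in S}\mathcal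 N(v)$. A local hypergraph is given by a node set $V_L\subseteq V$ and a hyperedge set $E_L\subseteq E$, with every $e\in E_L$ contained in $V_L$. Every node of $V_L$ keeps its terminal edge. For $S\subseteq V_L$, its cut value is $$\mathrm{Lstcut}_\alpha(S)=\sum_{e\in E_L}w_e(e\cap S)+\alpha\sum_{v\in V_L\cap R,\,v\notin S}d_v+\alpha\varepsilon\sum_{v\in V_L\cap\bar R,\,v\in S}d_v.$$ Algorithm 2 works as follows. Initialize $V_L=R\cup\mathcal N(R)$, $E_L=E(R)$, and $X=\emptyset$. Then repeat: 1. Compute $S_L\in\arg\min_{S\subseteq V_L}\mathrm{Lstcut}_\alpha(S)$. 2. Set $N=(S_L\cap\bar R)\setminus X$. 3. Update $V_L\leftarrow V_L\cup\mathcal N(N)$, $E_L\leftarrow E_L\cup E(N)$, and $X\leftarrow X\cup N$. Stop when $N=\emptyset$ and return $S_L$. *)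

theory Defs
  imports Main "HOL-Library.Extended_Real"
begin

definition splitting_hypergraph ::
  "'a set \<Rightarrow> 'a set set \<Rightarrow> ('a set \<Rightarrow> 'a set \<Rightarrow> real) \<Rightarrow> bool" where
  "splitting_hypergraph V E w \<longleftrightarrow>
     finite V \<and> (\<forall>e\<in>E. e \<subseteq> V) \<and>
     (\<forall>e\<in>E. \<forall>A. A \<subseteq> e \<longrightarrow> w e A \<ge> 0) \<and>
     (\<forall>e\<in>E. \<forall>A. A \<subseteq> e \<longrightarrow> w e A = w e (e - A)) \<and>
     (\<forall>e\<in>E. w e {} = 0 \<and> w e e = 0)"

definition hcut :: "'a set set \<Rightarrow> ('a set \<Rightarrow> 'a set \<Rightarrow> real) \<Rightarrow> 'a set \<Rightarrow> real" where
  "hcut E w S = (\<Sum>e\<in>E. w e (e \<inter> S))"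

definition deg :: "'a set set \<Rightarrow> ('a set \<Rightarrow> 'a set \<Rightarrow> real) \<Rightarrow> 'a \<Rightarrow> real" where
  "deg E w v = (\<Sum>e\<in>{e\<in>E. v \<in> e}. w e {v})"

definition vol :: "'a set set \<Rightarrow> ('a set \<Rightarrow> 'a set \<Rightarrow> real) \<Rightarrow> 'a set \<Rightarrow> real" where
  "vol E w S = (\<Sum>v\<in>S. deg E w v)"

definition Hstcut ::
  "'a set \<Rightarrow> 'a set set \<Rightarrow> ('a set \<Rightarrow> 'a set \<Rightarrow> real) \<Rightarrow> 'a set \<Rightarrow> real \<Rightarrow> real \<Rightarrow> 'a set \<Rightarrow> real" where
  "Hstcut V E w R eps alpha S =
     hcut E w S + alpha * vol E w ((V - S) \<inter> R) + alpha * eps * vol E w (S \<inter> (V - R))"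

text \<open>Local cut value on the local hypergraph (VL, EL); degrees are those of the full hypergraph.\<close>
definition Lstcut ::
  "'a set set \<Rightarrow> ('a set \<Rightarrow> 'a set \<Rightarrow> real) \<Rightarrow> 'a set \<Rightarrow> real \<Rightarrow> real \<Rightarrow>
   'a set \<Rightarrow> 'a set set \<Rightarrow> 'a set \<Rightarrow> real" where
  "Lstcut E w R eps alpha VL EL S =
     (\<Sum>e\<in>EL. w e (e \<inter> S))
     + alpha * (\<Sum>v\<in>{v\<in>VL \<inter> R. v \<notin> S}. deg E w v)
     + alpha * eps * (\<Sum>v\<in>{v\<in>VL - R. v \<in> S}. deg E w v)"

definition edges_at :: "'a set set \<Rightarrow> 'a set \<Rightarrow> 'a set set" where
  "edges_at E S = {e\<in>E. \<exists>v\<in>S. v \<in> e}"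

definition nbhd :: "'a set set \<Rightarrow> 'a set \<Rightarrow> 'a set" where
  "nbhd E S = {u. \<exists>v\<in>S. \<exists>e\<in>E. u \<in> e \<and> v \<in> e}"

definition is_argmin_on :: "('b \<Rightarrow> real) \<Rightarrow> 'b set \<Rightarrow> 'b \<Rightarrow> bool" where
  "is_argmin_on f A x \<longleftrightarrow> x \<in> A \<and> (\<forall>y\<in>A. f x \<le> f y)"

text \<open>States (VL, EL, X) reachable by Algorithm 2 (for any choice of minimisers).\<close>
inductive alg2_state ::
  "'a set \<Rightarrow> 'a set set \<Rightarrow> ('a set \<Rightarrow> 'a set \<Rightarrow> real) \<Rightarrow> 'a set \<Rightarrow> real \<Rightarrow> real \<Rightarrow>
   'a set \<Rightarrow> 'a set set \<Rightarrow> 'a set \<Rightarrow> bool"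
  for V E w R eps alpha where
  init: "alg2_state V E w R eps alpha (R \<union> nbhd E R) (edges_at E R) {}"
| step: "alg2_state V E w R eps alpha VL EL X \<Longrightarrow>
         is_argmin_on (Lstcut E w R eps alpha VL EL) (Pow VL) SL \<Longrightarrow>
         N = (SL - R) - X \<Longrightarrow> N \<noteq> {} \<Longrightarrow>
         alg2_state V E w R eps alpha (VL \<union> nbhd E N) (EL \<union> edges_at E N) (X \<union> N)"

text \<open>SL is a possible output of Algorithm 2: in a reachable state, SL is a local minimiser
  and the resulting N is empty, so the algorithm stops and returns SL.\<close>
definition alg2_output ::
  "'a set \<Rightarrow> 'a set set \<Rightarrow> ('a set \<Rightarrow> 'a set \<Rightarrow> real) \<Rightarrow> 'a set \<Rightarrow> real \<Rightarrow> real \<Rightarrow> 'a set \<Rightarrow> bool" where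
  "alg2_output V E w R eps alpha SL \<longleftrightarrow>
     (\<exists>VL EL X. alg2_state V E w R eps alpha VL EL X \<and>
        is_argmin_on (Lstcut E w R eps alpha VL EL) (Pow VL) SL \<and>
        (SL - R) - X = {})"

end

theory Submission
  imports Defs
begin

lemma nbhd_sub: "\<forall>e\<in>E. e \<subseteq> V \<Longrightarrow> nbhd E N \<subseteq> V"
  unfolding nbhd_def by blast

lemma edges_at_sub_nbhd: "e \<in> edges_at E N \<Longrightarrow> e \<subseteq> nbhd E N"
  unfolding nbhd_def edges_at_def by blast

lemma edges_at_sub: "edges_at E N \<subseteq> E"
  unfolding edges_at_def by blast

lemma edges_at_Un: "edges_at E (A \<union> B) = edges_at E A \<union> edges_at E B"
  unfolding edges_at_def by blast

lemma edges_at_empty: "edges_at E {} = {}"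
  unfolding edges_at_def by blast

lemma inv:
  assumes "alg2_state V E w R eps alpha VL EL X"
    and H: "splitting_hypergraph V E w" and RV: "R \<subseteq> V"
  shows "R \<subseteq> VL \<and> VL \<subseteq> V \<and> EL \<subseteq> E \<and> (\<forall>e\<in>EL. e \<subseteq> VL)
         \<and> edges_at E R \<subseteq> EL \<and> edges_at E X \<subseteq> EL"
  using assms(1)
proof induction
  case init
  have eV: "\<forall>e\<in>E. e \<subseteq> V" using H unfolding splitting_hypergraph_def by (elim conjE)
  have "R \<union> nbhd E R \<subseteq> V" using RV nbhd_sub[OF eV] by (rule Un_least)
  moreover have "\<forall>e\<in>edges_at E R. e \<subseteq> R \<union> nbhd E R"
    using edges_at_sub_nbhd by blast
  ultimately show ?case by (simp add: edges_at_sub edges_at_empty)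
next
  case (step VL EL X SL N)
  have eV: "\<forall>e\<in>E. e \<subseteq> V" using H unfolding splitting_hypergraph_def by (elim conjE)
  have IH: "R \<subseteq> VL" "VL \<subseteq> V" "EL \<subseteq> E" "\<forall>e\<in>EL. e \<subseteq> VL"
     "edges_at E R \<subseteq> EL" "edges_at E X \<subseteq> EL" using step.IH by simp_all
  have a: "VL \<union> nbhd E N \<subseteq> V" using IH(2) nbhd_sub[OF eV] by (rule Un_least)
  have b: "\<forall>e\<in>EL \<union> edges_at E N. e \<subseteq> VL \<union> nbhd E N"
    using IH(4) edges_at_sub_nbhd by blast
  have c: "EL \<union> edges_at E N \<subseteq> E" using IH(3) edges_at_sub by (rule Un_least)
  have d: "edges_at E (X \<union> N) \<subseteq> EL \<union> edges_at E N"
    unfolding edges_at_Un using IH(6) by blast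
  show ?case using a b c d IH(1,5) by blast
qed

theorem theorem2:
  fixes V :: "'a set" and E :: "'a set set" and w :: "'a set \<Rightarrow> 'a set \<Rightarrow> real"
    and R :: "'a set" and eps alpha :: real and SL :: "'a set"
  assumes "splitting_hypergraph V E w"
    and "R \<subseteq> V" and "eps > 0" and "alpha > 0"
    and "alg2_output V E w R eps alpha SL"
  shows "is_argmin_on (Hstcut V E w R eps alpha) (Pow V) SL"
proof -
  obtain VL EL X where st: "alg2_state V E w R eps alpha VL EL X"
    and am: "is_argmin_on (Lstcut E w R eps alpha VL EL) (Pow VL) SL"
    and emp: "(SL - R) - X = {}"
    using assms(5) unfolding alg2_output_def by (elim exE conjE)
  note I = inv[OF st assms(1) assms(2)]
  have Hs: "finite V \<and> (\<forall>e\<in>E. e \<subseteq> V) \<and>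
     (\<forall>e\<in>E. \<forall>A. A \<subseteq> e \<longrightarrow> w e A \<ge> 0) \<and>
     (\<forall>e\<in>E. \<forall>A. A \<subseteq> e \<longrightarrow> w e A = w e (e - A)) \<and>
     (\<forall>e\<in>E. w e {} = 0 \<and> w e e = 0)"
    using assms(1) unfolding splitting_hypergraph_def .
  have fV: "finite V" using Hs by (rule conjunct1)
  have eV: "\<forall>e\<in>E. e \<subseteq> V" using Hs[THEN conjunct2, THEN conjunct1] .
  have wnn: "\<forall>e\<in>E. \<forall>A. A \<subseteq> e \<longrightarrow> w e A \<ge> 0" using Hs[THEN conjunct2, THEN conjunct2, THEN conjunct1] .
  have w0: "\<forall>e\<in>E. w e {} = 0"
  proof
    fix e assume "e \<in> E" thus "w e {} = 0"
      using Hs[THEN conjunct2, THEN conjunct2, THEN conjunct2, THEN conjunct2] by blast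
  qed
  have fE: "finite E"
  proof (rule finite_subset[of E "Pow V"])
    show "E \<subseteq> Pow V" using eV by blast
    show "finite (Pow V)" using fV by simp
  qed
  have dnn: "deg E w v \<ge> 0" for v
    unfolding deg_def by (rule sum_nonneg) (use wnn in blast)
  have SLVL: "SL \<subseteq> VL" using am unfolding is_argmin_on_def by blast
  have SLV: "SL \<subseteq> V" using SLVL I by blast
  have fVL: "finite VL" using I by (intro finite_subset[OF _ fV]) blast
  have eqH: "Hstcut V E w R eps alpha SL = Lstcut E w R eps alpha VL EL SL"
  proof -
    have "hcut E w SL = (\<Sum>e\<in>EL. w e (e \<inter> SL))"
      unfolding hcut_def
    proof (rule sum.mono_neutral_right)
      show "finite E" by fact
      show "EL \<subseteq> E" using I by blast
      show "\<forall>i\<in>E - EL. w i (i \<inter> SL) = 0"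
      proof
        fix e assume e: "e \<in> E - EL"
        have "e \<inter> SL = {}"
        proof (rule ccontr)
          assume "e \<inter> SL \<noteq> {}"
          then obtain v where "v \<in> e" "v \<in> SL" by auto
          hence "v \<in> R \<or> v \<in> X" using emp by blast
          hence "e \<in> edges_at E R \<or> e \<in> edges_at E X"
            using e \<open>v \<in> e\<close> unfolding edges_at_def by blast
          thus False using I e by blast
        qed
        thus "w e (e \<inter> SL) = 0" using w0 e by simp
      qed
    qed
    note h1 = this
    have h2: "(V - SL) \<inter> R = {v\<in>VL \<inter> R. v \<notin> SL}" using I by blast
    have h3: "SL \<inter> (V - R) = {v\<in>VL - R. v \<in> SL}" using SLVL SLV by blast
    show ?thesis unfolding Hstcut_def Lstcut_def vol_def by (simp only: h1 h2 h3)
  qed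
  show ?thesis unfolding is_argmin_on_def
  proof (intro conjI ballI)
    show "SL \<in> Pow V" using SLV by auto
  next
    fix S assume "S \<in> Pow V"
    hence SV: "S \<subseteq> V" by auto
    define T where "T = S \<inter> VL"
    have "Lstcut E w R eps alpha VL EL SL \<le> Lstcut E w R eps alpha VL EL T"
    proof -
      have "T \<in> Pow VL" unfolding T_def by blast
      thus ?thesis using am unfolding is_argmin_on_def by blast
    qed
    also have "\<dots> \<le> Hstcut V E w R eps alpha S"
    proof -
      have eq: "\<forall>e\<in>EL. e \<inter> T = e \<inter> S" using I unfolding T_def by blast
      have "(\<Sum>e\<in>EL. w e (e \<inter> T)) = (\<Sum>e\<in>EL. w e (e \<inter> S))"
        using eq by (intro sum.cong) auto
      also have "\<dots> \<le> hcut E w S"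
        unfolding hcut_def
      proof (rule sum_mono2)
        show "EL \<subseteq> E" using I by blast
        show "\<And>b. b \<in> E - EL \<Longrightarrow> 0 \<le> w b (b \<inter> S)" using wnn by blast
      qed (rule fE)
      finally have a: "(\<Sum>e\<in>EL. w e (e \<inter> T)) \<le> hcut E w S" .
      have b: "{v\<in>VL \<inter> R. v \<notin> T} = (V - S) \<inter> R" using I unfolding T_def by blast
      have "(\<Sum>v\<in>{v\<in>VL - R. v \<in> T}. deg E w v) \<le> vol E w (S \<inter> (V - R))"
        unfolding vol_def
      proof (rule sum_mono2)
        show "finite (S \<inter> (V - R))" using fV by (rule finite_subset[rotated]) blast
        show "{v \<in> VL - R. v \<in> T} \<subseteq> S \<inter> (V - R)" using I unfolding T_def by blast
      qed (rule dnn)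
      hence c: "alpha * eps * (\<Sum>v\<in>{v\<in>VL - R. v \<in> T}. deg E w v)
          \<le> alpha * eps * vol E w (S \<inter> (V - R))"
        using assms(3,4) by (intro mult_left_mono) auto
      show ?thesis using a c unfolding Hstcut_def Lstcut_def vol_def b
        by linarith
    qed
    finally show "Hstcut V E w R eps alpha SL \<le> Hstcut V E w R eps alpha S"
      using eqH by linarith
  qed
qed

end
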